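(* Let $R$ be a commutative ring with unit, $\mathcal{P}$ a poset satisfying the descending chain condition, $F\colon\mathcal{P}\to R\text{-mod}$ a functor, and $i\in\mathcal{P}$. If $F$ is pseudo-projective at $i$, then the natural map $\operatorname{colim}_{\mathcal{P}_{<i}}F\to F(i)$ is injective.
   Context: DCC: no infinite strictly descending chains. $\mathcal{P}_{<i}=\{j:j<i\}$, $\mathcal{P}_{\le i}=\{j:j\le i\}$. $F(j<i)$ is the image of the arrow $j\to i$, $F(i<i)=1$. $\operatorname{Im}_F(j)=\sum_{k<j}\operatorname{Im}F(k<j)$; $\max J$ is the set of maximal elements of $J$. $F$ is pseudo-projective at $i$ if for every finite $J\subset\mathcal{P}_{\le i}$ and every $\oplus_{j\in J}x_j\in\bigoplus_{j\in J}F(j)$ with $\sum_{j\in J}F(j<i)(x_j)=0$, one has $x_j\in\operatorname{Im}_F(j)$ for all $j\in\max J$. *)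

theory Defs
  imports Complex_Main
begin

text \<open>
A functor F : P -> R-mod is given by an
ambient R-module (type 'm with scalar multiplication scale), a family of submodules
M j (the modules F(j)), and maps Fmap j k (the image F(j<k) of the arrow j -> k,
for j <= k) which are R-linear from M j to M k, satisfying the functor laws.
\<close>

definition DCC :: "'p::order itself \<Rightarrow> bool" where
  "DCC _ \<longleftrightarrow> \<not> (\<exists>f :: nat \<Rightarrow> 'p. \<forall>n. f (Suc n) < f n)"

definition is_functor ::
  "('r::comm_ring_1 \<Rightarrow> 'm::ab_group_add \<Rightarrow> 'm) \<Rightarrow> ('p::order \<Rightarrow> 'm set)
     \<Rightarrow> ('p \<Rightarrow> 'p \<Rightarrow> 'm \<Rightarrow> 'm) \<Rightarrow> bool" where
  "is_functor scale M Fmap \<longleftrightarrow>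
     module scale \<and>
     (\<forall>j. module.subspace scale (M j)) \<and>
     (\<forall>j k. j \<le> k \<longrightarrow>
        (\<forall>x\<in>M j. Fmap j k x \<in> M k) \<and>
        (\<forall>x\<in>M j. \<forall>y\<in>M j. Fmap j k (x + y) = Fmap j k x + Fmap j k y) \<and>
        (\<forall>c. \<forall>x\<in>M j. Fmap j k (scale c x) = scale c (Fmap j k x))) \<and>
     (\<forall>j. \<forall>x\<in>M j. Fmap j j x = x) \<and>
     (\<forall>j k l. j \<le> k \<longrightarrow> k \<le> l \<longrightarrow> (\<forall>x\<in>M j. Fmap k l (Fmap j k x) = Fmap j l x))"

definition ImF :: "('p::order \<Rightarrow> 'm::ab_group_add set) \<Rightarrow> ('p \<Rightarrow> 'p \<Rightarrow> 'm \<Rightarrow> 'm) \<Rightarrow> 'p \<Rightarrow> 'm set" where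
  "ImF M Fmap j = {(\<Sum>k\<in>K. Fmap k j (y k)) | K y.
      finite K \<and> K \<subseteq> {k. k < j} \<and> (\<forall>k\<in>K. y k \<in> M k)}"

definition maxset :: "'p::order set \<Rightarrow> 'p set" where
  "maxset J = {j \<in> J. \<not> (\<exists>k\<in>J. j < k)}"

definition pseudo_projective_at ::
  "('p::order \<Rightarrow> 'm::ab_group_add set) \<Rightarrow> ('p \<Rightarrow> 'p \<Rightarrow> 'm \<Rightarrow> 'm) \<Rightarrow> 'p \<Rightarrow> bool" where
  "pseudo_projective_at M Fmap i \<longleftrightarrow>
     (\<forall>J x. finite J \<and> J \<subseteq> {j. j \<le> i} \<and> (\<forall>j\<in>J. x j \<in> M j) \<and>
            (\<Sum>j\<in>J. Fmap j i (x j)) = 0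
        \<longrightarrow> (\<forall>j\<in>maxset J. x j \<in> ImF M Fmap j))"

text \<open>Colimit of F restricted to P_{<i}, constructed as the quotient of the direct sum
  of the F(j), j<i, by the submodule generated by the elements d_j(x) - d_k(F(j<k) x),
  j <= k < i.\<close>

definition dsum_lt :: "('p::order \<Rightarrow> 'm::zero set) \<Rightarrow> 'p \<Rightarrow> ('p \<Rightarrow> 'm) set" where
  "dsum_lt M i = {x. finite {j. x j \<noteq> 0} \<and> (\<forall>j. x j \<in> M j) \<and> (\<forall>j. \<not> j < i \<longrightarrow> x j = 0)}"

definition delta :: "'p \<Rightarrow> 'm::zero \<Rightarrow> 'p \<Rightarrow> 'm" where
  "delta j v = (\<lambda>l. if l = j then v else 0)"

inductive_set colim_rels ::
  "('r::comm_ring_1 \<Rightarrow> 'm::ab_group_add \<Rightarrow> 'm) \<Rightarrow> ('p::order \<Rightarrow> 'm set)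
     \<Rightarrow> ('p \<Rightarrow> 'p \<Rightarrow> 'm \<Rightarrow> 'm) \<Rightarrow> 'p \<Rightarrow> ('p \<Rightarrow> 'm) set"
  for scale M Fmap i where
  zero: "(\<lambda>_. 0) \<in> colim_rels scale M Fmap i"
| gen: "j \<le> k \<Longrightarrow> k < i \<Longrightarrow> v \<in> M j \<Longrightarrow>
         (\<lambda>l. delta j v l - delta k (Fmap j k v) l) \<in> colim_rels scale M Fmap i"
| add: "z \<in> colim_rels scale M Fmap i \<Longrightarrow> w \<in> colim_rels scale M Fmap i \<Longrightarrow>
         (\<lambda>l. z l + w l) \<in> colim_rels scale M Fmap i"
| smult: "z \<in> colim_rels scale M Fmap i \<Longrightarrow> (\<lambda>l. scale c (z l)) \<in> colim_rels scale M Fmap i"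

definition colim_equiv ::
  "('r::comm_ring_1 \<Rightarrow> 'm::ab_group_add \<Rightarrow> 'm) \<Rightarrow> ('p::order \<Rightarrow> 'm set)
     \<Rightarrow> ('p \<Rightarrow> 'p \<Rightarrow> 'm \<Rightarrow> 'm) \<Rightarrow> 'p \<Rightarrow> (('p \<Rightarrow> 'm) \<times> ('p \<Rightarrow> 'm)) set" where
  "colim_equiv scale M Fmap i = {(x, y). x \<in> dsum_lt M i \<and> y \<in> dsum_lt M i \<and>
       (\<lambda>l. x l - y l) \<in> colim_rels scale M Fmap i}"

definition colim_lt ::
  "('r::comm_ring_1 \<Rightarrow> 'm::ab_group_add \<Rightarrow> 'm) \<Rightarrow> ('p::order \<Rightarrow> 'm set)
     \<Rightarrow> ('p \<Rightarrow> 'p \<Rightarrow> 'm \<Rightarrow> 'm) \<Rightarrow> 'p \<Rightarrow> ('p \<Rightarrow> 'm) set set" where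
  "colim_lt scale M Fmap i = dsum_lt M i // colim_equiv scale M Fmap i"

definition colim_map ::
  "('p::order \<Rightarrow> 'p \<Rightarrow> 'm::ab_group_add \<Rightarrow> 'm) \<Rightarrow> 'p \<Rightarrow> ('p \<Rightarrow> 'm) set \<Rightarrow> 'm" where
  "colim_map Fmap i C = the_elem ((\<lambda>x. \<Sum>j\<in>{j. x j \<noteq> 0}. Fmap j i (x j)) ` C)"

end

theory Submission
  imports Defs "HOL-Library.Multiset"
begin

definition Ssum :: "('p::order \<Rightarrow> 'p \<Rightarrow> 'm::ab_group_add \<Rightarrow> 'm) \<Rightarrow> 'p \<Rightarrow> ('p \<Rightarrow> 'm) \<Rightarrow> 'm" where
  "Ssum Fmap i x = (\<Sum>j\<in>{j. x j \<noteq> 0}. Fmap j i (x j))"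

context
  fixes scale :: "'r::comm_ring_1 \<Rightarrow> 'm::ab_group_add \<Rightarrow> 'm"
    and M :: "'p::order \<Rightarrow> 'm set"
    and Fmap :: "'p \<Rightarrow> 'p \<Rightarrow> 'm \<Rightarrow> 'm"
    and i :: 'p
  assumes F: "is_functor scale M Fmap"
begin

lemma modl: "module scale" using F[unfolded is_functor_def] by simp
lemma subsp: "module.subspace scale (M j)" using F[unfolded is_functor_def] by simp
lemma zeroM: "0 \<in> M j" by (rule module.subspace_0[OF modl subsp])
lemma addM: "x \<in> M j \<Longrightarrow> y \<in> M j \<Longrightarrow> x + y \<in> M j" by (rule module.subspace_add[OF modl subsp])
lemma diffM: "x \<in> M j \<Longrightarrow> y \<in> M j \<Longrightarrow> x - y \<in> M j" by (rule module.subspace_diff[OF modl subsp])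
lemma negM: "x \<in> M j \<Longrightarrow> - x \<in> M j" by (rule module.subspace_neg[OF modl subsp])
lemma scaleM: "x \<in> M j \<Longrightarrow> scale c x \<in> M j" by (rule module.subspace_scale[OF modl subsp])
lemma sumM: "(\<And>k. k \<in> K \<Longrightarrow> f k \<in> M j) \<Longrightarrow> sum f K \<in> M j" by (rule module.subspace_sum[OF modl subsp])
lemma scale_m1: "scale (-1) x = - x" using module.scale_minus_left[OF modl] module.scale_one[OF modl] by metis

lemma Fin: "j \<le> k \<Longrightarrow> x \<in> M j \<Longrightarrow> Fmap j k x \<in> M k" using F[unfolded is_functor_def] by simp
lemma Fadd: "j \<le> k \<Longrightarrow> x \<in> M j \<Longrightarrow> y \<in> M j \<Longrightarrow> Fmap j k (x + y) = Fmap j k x + Fmap j k y"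
  using F[unfolded is_functor_def] by simp
lemma Fscale: "j \<le> k \<Longrightarrow> x \<in> M j \<Longrightarrow> Fmap j k (scale c x) = scale c (Fmap j k x)"
  using F[unfolded is_functor_def] by simp
lemma Fid: "x \<in> M j \<Longrightarrow> Fmap j j x = x" using F[unfolded is_functor_def] by simp
lemma Fcomp: "j \<le> k \<Longrightarrow> k \<le> l \<Longrightarrow> x \<in> M j \<Longrightarrow> Fmap k l (Fmap j k x) = Fmap j l x"
  using F[unfolded is_functor_def] by simp
lemma F0: "j \<le> k \<Longrightarrow> Fmap j k 0 = 0"
  using Fadd[of j k 0 0] zeroM by simp
lemma Fdiff: "j \<le> k \<Longrightarrow> x \<in> M j \<Longrightarrow> y \<in> M j \<Longrightarrow> Fmap j k (x - y) = Fmap j k x - Fmap j k y"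
  using Fadd[of j k "x - y" y] diffM by (simp add: algebra_simps)

lemma Fneg: "j \<le> k \<Longrightarrow> x \<in> M j \<Longrightarrow> Fmap j k (- x) = - Fmap j k x"
  using Fdiff[of j k 0 x] zeroM F0 by simp

lemma Ssum_T:
  assumes "finite T" "{j. x j \<noteq> 0} \<subseteq> T" "\<forall>j\<in>T. j \<le> i"
  shows "Ssum Fmap i x = (\<Sum>j\<in>T. Fmap j i (x j))"
  unfolding Ssum_def
  by (rule sum.mono_neutral_left) (use assms F0 in auto)

lemma dsum_fin: "x \<in> dsum_lt M i \<Longrightarrow> finite {j. x j \<noteq> 0}" unfolding dsum_lt_def by blast
lemma dsum_M: "x \<in> dsum_lt M i \<Longrightarrow> x j \<in> M j" unfolding dsum_lt_def by blast
lemma dsum_lt: "x \<in> dsum_lt M i \<Longrightarrow> x j \<noteq> 0 \<Longrightarrow> j < i" unfolding dsum_lt_def by blast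

lemma Ssum_add:
  assumes "x \<in> dsum_lt M i" "y \<in> dsum_lt M i"
  shows "Ssum Fmap i (\<lambda>l. x l + y l) = Ssum Fmap i x + Ssum Fmap i y"
proof -
  let ?T = "{j. x j \<noteq> 0} \<union> {j. y j \<noteq> 0}"
  have T: "finite ?T" "\<forall>j\<in>?T. j \<le> i" using assms dsum_fin dsum_lt by (auto intro: less_imp_le)
  have "Ssum Fmap i (\<lambda>l. x l + y l) = (\<Sum>j\<in>?T. Fmap j i (x j + y j))"
    by (rule Ssum_T) (use T in auto)
  also have "\<dots> = (\<Sum>j\<in>?T. Fmap j i (x j) + Fmap j i (y j))"
    by (rule sum.cong) (use T assms dsum_M Fadd in auto)
  also have "\<dots> = Ssum Fmap i x + Ssum Fmap i y"
    by (simp add: sum.distrib Ssum_T[OF T(1) _ T(2)])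
  finally show ?thesis .
qed

lemma Ssum_diff:
  assumes "x \<in> dsum_lt M i" "y \<in> dsum_lt M i"
  shows "Ssum Fmap i (\<lambda>l. x l - y l) = Ssum Fmap i x - Ssum Fmap i y"
proof -
  let ?T = "{j. x j \<noteq> 0} \<union> {j. y j \<noteq> 0}"
  have T: "finite ?T" "\<forall>j\<in>?T. j \<le> i" using assms dsum_fin dsum_lt by (auto intro: less_imp_le)
  have "Ssum Fmap i (\<lambda>l. x l - y l) = (\<Sum>j\<in>?T. Fmap j i (x j - y j))"
    by (rule Ssum_T) (use T in auto)
  also have "\<dots> = (\<Sum>j\<in>?T. Fmap j i (x j) - Fmap j i (y j))"
    by (rule sum.cong) (use T assms dsum_M Fdiff in auto)
  also have "\<dots> = Ssum Fmap i x - Ssum Fmap i y"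
    by (simp add: sum_subtractf Ssum_T[OF T(1) _ T(2)])
  finally show ?thesis .
qed


lemma dsum_add: "x \<in> dsum_lt M i \<Longrightarrow> y \<in> dsum_lt M i \<Longrightarrow> (\<lambda>l. x l + y l) \<in> dsum_lt M i"
proof -
  assume a: "x \<in> dsum_lt M i" "y \<in> dsum_lt M i"
  have "{l. x l + y l \<noteq> 0} \<subseteq> {l. x l \<noteq> 0} \<union> {l. y l \<noteq> 0}" by auto
  then have "finite {l. x l + y l \<noteq> 0}" using a dsum_fin finite_subset by blast
  then show ?thesis using a unfolding dsum_lt_def by (auto intro: addM)
qed

lemma dsum_scale: "x \<in> dsum_lt M i \<Longrightarrow> (\<lambda>l. scale c (x l)) \<in> dsum_lt M i"
proof -
  assume a: "x \<in> dsum_lt M i"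
  have "{l. scale c (x l) \<noteq> 0} \<subseteq> {l. x l \<noteq> 0}" using module.scale_zero_right[OF modl] by auto
  then have "finite {l. scale c (x l) \<noteq> 0}" using a dsum_fin finite_subset by blast
  then show ?thesis using a module.scale_zero_right[OF modl] unfolding dsum_lt_def by (auto intro: scaleM)
qed

lemma Ssum_scale:
  assumes "x \<in> dsum_lt M i"
  shows "Ssum Fmap i (\<lambda>l. scale c (x l)) = scale c (Ssum Fmap i x)"
proof -
  let ?T = "{j. x j \<noteq> 0}"
  have T: "finite ?T" "\<forall>j\<in>?T. j \<le> i" using assms dsum_fin dsum_lt by (auto intro: less_imp_le)
  have "Ssum Fmap i (\<lambda>l. scale c (x l)) = (\<Sum>j\<in>?T. Fmap j i (scale c (x j)))"
    by (rule Ssum_T) (use T module.scale_zero_right[OF modl] in auto)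
  also have "\<dots> = (\<Sum>j\<in>?T. scale c (Fmap j i (x j)))"
    by (rule sum.cong) (use T assms dsum_M Fscale in auto)
  also have "\<dots> = scale c (Ssum Fmap i x)"
    by (simp add: module.scale_sum_right[OF modl] Ssum_def)
  finally show ?thesis .
qed

lemma rels_props:
  assumes "z \<in> colim_rels scale M Fmap i"
  shows "z \<in> dsum_lt M i \<and> Ssum Fmap i z = 0"
  using assms
proof (induction rule: colim_rels.induct)
  case zero
  then show ?case by (simp add: dsum_lt_def zeroM Ssum_def)
next
  case (gen j k v)
  let ?z = "\<lambda>l. delta j v l - delta k (Fmap j k v) l"
  have fk: "Fmap j k v \<in> M k" using gen Fin by blast
  have "{l. ?z l \<noteq> 0} \<subseteq> {j, k}" by (auto simp: delta_def)
  then have fin: "finite {l. ?z l \<noteq> 0}" using finite_subset by blast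
  have inM: "?z l \<in> M l" for l
    using gen fk by (auto simp: delta_def intro: diffM zeroM negM)
  have lt: "\<not> l < i \<Longrightarrow> ?z l = 0" for l using gen by (auto simp: delta_def)
  have ds: "?z \<in> dsum_lt M i" using fin inM lt unfolding dsum_lt_def by blast
  show ?case
  proof (cases "j = k")
    case True
    then have "?z = (\<lambda>_. 0)" using gen Fid by (auto simp: delta_def)
    then show ?thesis using ds by (simp add: Ssum_def)
  next
    case False
    have "Ssum Fmap i ?z = (\<Sum>l\<in>{j,k}. Fmap l i (?z l))"
      by (rule Ssum_T) (use gen in \<open>auto simp: delta_def\<close>)
    also have "\<dots> = Fmap j i v - Fmap k i (Fmap j k v)"
      using False gen F0 zeroM by (simp add: delta_def Fdiff Fneg fk less_imp_le)
    also have "\<dots> = 0" using gen Fcomp[of j k i v] by (simp add: less_imp_le)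
    finally show ?thesis using ds by simp
  qed
next
  case (add z w)
  then show ?case using dsum_add Ssum_add by simp
next
  case (smult z c)
  then show ?case using dsum_scale Ssum_scale module.scale_zero_right[OF modl] by simp
qed

lemma rels_sum:
  assumes "finite K" "\<And>k. k \<in> K \<Longrightarrow> f k \<in> colim_rels scale M Fmap i"
  shows "(\<lambda>l. \<Sum>k\<in>K. f k l) \<in> colim_rels scale M Fmap i"
  using assms
proof (induction K rule: finite_induct)
  case empty
  then show ?case using colim_rels.zero by simp
next
  case (insert a K)
  then have "(\<lambda>l. f a l + (\<Sum>k\<in>K. f k l)) \<in> colim_rels scale M Fmap i"
    by (intro colim_rels.add) auto
  then show ?case using insert by simp
qed

lemma rels_diff:
  assumes "z \<in> colim_rels scale M Fmap i" "w \<in> colim_rels scale M Fmap i"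
  shows "(\<lambda>l. z l - w l) \<in> colim_rels scale M Fmap i"
proof -
  have "(\<lambda>l. z l + scale (-1) (w l)) \<in> colim_rels scale M Fmap i"
    using assms by (intro colim_rels.add colim_rels.smult)
  then show ?thesis by (simp add: scale_m1)
qed

lemma main_rels:
  assumes dcc: "DCC TYPE('p)" and pp: "pseudo_projective_at M Fmap i"
    and zz: "z \<in> dsum_lt M i" "Ssum Fmap i z = 0"
  shows "z \<in> colim_rels scale M Fmap i"
proof -
  let ?r = "{(a::'p, b). a < b}"
  have wfr: "wf ?r" using dcc unfolding DCC_def wf_iff_no_infinite_down_chain by auto
  have wfm: "wf (mult1 ?r)" by (rule wf_mult1[OF wfr])
  have claim: "\<forall>z. z \<in> dsum_lt M i \<longrightarrow> Ssum Fmap i z = 0 \<longrightarrow> {j. z j \<noteq> 0} \<subseteq> set_mset A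
      \<longrightarrow> z \<in> colim_rels scale M Fmap i" for A
  proof (induction A rule: wf_induct[OF wfm])
    case (1 A)
    show ?case
    proof (intro allI impI)
      fix z assume z: "z \<in> dsum_lt M i" "Ssum Fmap i z = 0" "{j. z j \<noteq> 0} \<subseteq> set_mset A"
      show "z \<in> colim_rels scale M Fmap i"
      proof (cases "{j. z j \<noteq> 0} = {}")
        case True then have "z = (\<lambda>_. 0)" by auto
        then show ?thesis using colim_rels.zero by simp
      next
        case False
        obtain j where j: "j \<in> {j. z j \<noteq> 0}" "\<forall>b\<in>{j. z j \<noteq> 0}. j \<le> b \<longrightarrow> j = b"
          using finite_has_maximal[OF dsum_fin[OF z(1)] False] by blast
        have jmax: "j \<in> maxset {j. z j \<noteq> 0}" using j unfolding maxset_def by (auto simp: less_le)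
        have sum0: "(\<Sum>j\<in>{j. z j \<noteq> 0}. Fmap j i (z j)) = 0" using z(2) by (simp add: Ssum_def)
        have sub: "{j. z j \<noteq> 0} \<subseteq> {j. j \<le> i}" using dsum_lt[OF z(1)] by (auto intro: less_imp_le)
        have pre: "finite {j. z j \<noteq> 0} \<and> {j. z j \<noteq> 0} \<subseteq> {j. j \<le> i} \<and>
            (\<forall>j\<in>{j. z j \<noteq> 0}. z j \<in> M j) \<and> (\<Sum>j\<in>{j. z j \<noteq> 0}. Fmap j i (z j)) = 0"
          using dsum_fin[OF z(1)] sub dsum_M[OF z(1)] sum0 by blast
        have "z j \<in> ImF M Fmap j"
          using pp[unfolded pseudo_projective_at_def, rule_format, OF pre] jmax by blast
        then obtain K y where K: "z j = (\<Sum>k\<in>K. Fmap k j (y k))" "finite K" "K \<subseteq> {k. k < j}"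
            "\<forall>k\<in>K. y k \<in> M k"
          unfolding ImF_def by blast
        have ji: "j < i" using j dsum_lt[OF z(1)] by auto
        define w where "w = (\<lambda>l. \<Sum>k\<in>K. delta k (y k) l - delta j (Fmap k j (y k)) l)"
        have w_rels: "w \<in> colim_rels scale M Fmap i" unfolding w_def
          by (rule rels_sum[OF K(2)]) (use K ji in \<open>auto intro: colim_rels.gen less_imp_le\<close>)
        have jK: "j \<notin> K" using K(3) by auto
        have w_eq: "w l = (if l \<in> K then y l else 0) - (if l = j then z j else 0)" for l
          unfolding w_def K(1) using K(2) by (simp add: sum_subtractf delta_def)
        define z' where "z' = (\<lambda>l. z l + w l)"
        have z'_eq: "z' l = (if l = j then 0 else z l) + (if l \<in> K then y l else 0)" for l
          using jK by (auto simp: z'_def w_eq)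
        have wds: "w \<in> dsum_lt M i" and Sw: "Ssum Fmap i w = 0" using rels_props[OF w_rels] by auto
        have z'ds: "z' \<in> dsum_lt M i" unfolding z'_def by (rule dsum_add[OF z(1) wds])
        have Sz': "Ssum Fmap i z' = 0" unfolding z'_def using Ssum_add[OF z(1) wds] z(2) Sw by simp
        have jA: "j \<in># A" by (rule subsetD[OF z(3) j(1)])
        obtain A0 where A0: "A = add_mset j A0" using multi_member_split[OF jA] by (elim exE)
        have supp: "{l. z' l \<noteq> 0} \<subseteq> set_mset (A0 + mset_set K)"
        proof
          fix l assume "l \<in> {l. z' l \<noteq> 0}"
          then have "(l \<noteq> j \<and> z l \<noteq> 0) \<or> l \<in> K" by (auto simp: z'_eq split: if_splits)
          then show "l \<in> set_mset (A0 + mset_set K)" using z(3) A0 K(2) by auto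
        qed
        have "(A0 + mset_set K, A) \<in> mult1 ?r"
          by (rule mult1I[OF A0 refl]) (use K(2,3) in auto)
        then have "z' \<in> colim_rels scale M Fmap i" using 1[rule_format, OF _ z'ds Sz' supp] by simp
        moreover have "z = (\<lambda>l. z' l - w l)" by (simp add: z'_def)
        ultimately show ?thesis using rels_diff w_rels by simp
      qed
    qed
  qed
  show ?thesis using claim[of "mset_set {j. z j \<noteq> 0}"] zz dsum_fin[OF zz(1)] by simp
qed

lemma dsum_diff: "x \<in> dsum_lt M i \<Longrightarrow> y \<in> dsum_lt M i \<Longrightarrow> (\<lambda>l. x l - y l) \<in> dsum_lt M i"
  using dsum_add[of x "\<lambda>l. scale (-1) (y l)"] dsum_scale[of y "-1"] by (simp add: scale_m1)

lemma equiv_E: "equiv (dsum_lt M i) (colim_equiv scale M Fmap i)"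
proof (rule equivI)
  show "colim_equiv scale M Fmap i \<subseteq> dsum_lt M i \<times> dsum_lt M i"
    unfolding colim_equiv_def by auto
  show "refl_on (dsum_lt M i) (colim_equiv scale M Fmap i)"
    by (rule refl_onI) (simp add: colim_equiv_def colim_rels.zero)
  show "sym (colim_equiv scale M Fmap i)"
  proof (rule symI)
    fix x y assume "(x, y) \<in> colim_equiv scale M Fmap i"
    then have a: "x \<in> dsum_lt M i" "y \<in> dsum_lt M i" "(\<lambda>l. x l - y l) \<in> colim_rels scale M Fmap i"
      unfolding colim_equiv_def by auto
    have "(\<lambda>l. scale (-1) (x l - y l)) \<in> colim_rels scale M Fmap i" using a(3) by (rule colim_rels.smult)
    then show "(y, x) \<in> colim_equiv scale M Fmap i" using a unfolding colim_equiv_def by (simp add: scale_m1)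
  qed
  show "trans (colim_equiv scale M Fmap i)"
  proof (rule transI)
    fix x y z assume "(x, y) \<in> colim_equiv scale M Fmap i" "(y, z) \<in> colim_equiv scale M Fmap i"
    then have a: "x \<in> dsum_lt M i" "z \<in> dsum_lt M i" "(\<lambda>l. x l - y l) \<in> colim_rels scale M Fmap i"
       "(\<lambda>l. y l - z l) \<in> colim_rels scale M Fmap i"
      unfolding colim_equiv_def by auto
    have "(\<lambda>l. (x l - y l) + (y l - z l)) \<in> colim_rels scale M Fmap i" using a(3,4) by (rule colim_rels.add)
    then show "(x, z) \<in> colim_equiv scale M Fmap i" using a unfolding colim_equiv_def by simp
  qed
qed

lemma cm_class:
  assumes x: "x \<in> dsum_lt M i"
  shows "colim_map Fmap i (colim_equiv scale M Fmap i `` {x}) = Ssum Fmap i x"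
proof -
  have "Ssum Fmap i ` (colim_equiv scale M Fmap i `` {x}) = {Ssum Fmap i x}"
  proof
    show "Ssum Fmap i ` (colim_equiv scale M Fmap i `` {x}) \<subseteq> {Ssum Fmap i x}"
    proof
      fix v assume "v \<in> Ssum Fmap i ` (colim_equiv scale M Fmap i `` {x})"
      then obtain w where w: "(x, w) \<in> colim_equiv scale M Fmap i" "v = Ssum Fmap i w" by auto
      then have a: "w \<in> dsum_lt M i" "(\<lambda>l. x l - w l) \<in> colim_rels scale M Fmap i"
        unfolding colim_equiv_def by auto
      have "Ssum Fmap i (\<lambda>l. x l - w l) = 0" using rels_props[OF a(2)] by simp
      then show "v \<in> {Ssum Fmap i x}" using Ssum_diff[OF x a(1)] w(2) by simp
    qed
    show "{Ssum Fmap i x} \<subseteq> Ssum Fmap i ` (colim_equiv scale M Fmap i `` {x})"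
      using equiv_class_self[OF equiv_E x] by auto
  qed
  moreover have "colim_map Fmap i C = the_elem (Ssum Fmap i ` C)" for C
    unfolding colim_map_def Ssum_def by simp
  ultimately show ?thesis by simp
qed

lemma inj_main:
  assumes dcc: "DCC TYPE('p)" and pp: "pseudo_projective_at M Fmap i"
  shows "inj_on (colim_map Fmap i) (colim_lt scale M Fmap i)"
proof (rule inj_onI)
  fix C1 C2 assume c1: "C1 \<in> colim_lt scale M Fmap i" and c2: "C2 \<in> colim_lt scale M Fmap i"
    and eq: "colim_map Fmap i C1 = colim_map Fmap i C2"
  obtain x where x: "C1 = colim_equiv scale M Fmap i `` {x}" "x \<in> dsum_lt M i"
    using c1 unfolding colim_lt_def by (rule quotientE)
  obtain y where y: "C2 = colim_equiv scale M Fmap i `` {y}" "y \<in> dsum_lt M i"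
    using c2 unfolding colim_lt_def by (rule quotientE)
  have "Ssum Fmap i x = Ssum Fmap i y" using eq x y cm_class by simp
  then have "Ssum Fmap i (\<lambda>l. x l - y l) = 0" using Ssum_diff[OF x(2) y(2)] by simp
  then have "(\<lambda>l. x l - y l) \<in> colim_rels scale M Fmap i"
    using main_rels[OF dcc pp dsum_diff[OF x(2) y(2)]] by simp
  then have "(x, y) \<in> colim_equiv scale M Fmap i" using x y unfolding colim_equiv_def by simp
  then show "C1 = C2" using x y equiv_class_eq_iff[OF equiv_E] by simp
qed
end

theorem lemma6p2:
  fixes scale :: "'r::comm_ring_1 \<Rightarrow> 'm::ab_group_add \<Rightarrow> 'm"
    and M :: "'p::order \<Rightarrow> 'm set"
    and Fmap :: "'p \<Rightarrow> 'p \<Rightarrow> 'm \<Rightarrow> 'm"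
    and i :: 'p
  assumes "DCC TYPE('p)"
    and "is_functor scale M Fmap"
    and "pseudo_projective_at M Fmap i"
  shows "inj_on (colim_map Fmap i) (colim_lt scale M Fmap i)"
  by (rule inj_main[OF assms(2) assms(1) assms(3)])

end
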